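(* Let $g$ be a regular expression over an alphabet of symbols, and let $x$ be a symbol that occurs exactly once (syntactically) in $g$. Let $\bar{x}_L, \bar{x}_R, \bar{y}_L, \bar{y}_R$ be finite (possibly empty) sequences of symbols. If $\bar{x}_L\, x\, \bar{y}_R \in [\![ g ]\!]$ and $\bar{y}_L\, x\, \bar{x}_R \in [\![ g ]\!]$, then $\bar{x}_L\, x\, \bar{x}_R \in [\![ g ]\!]$.
   Context: Regular expressions are generated by: the empty regex $\epsilon$; a single symbol $x_0$; alternation $g_L \mid g_R$; sequencing (concatenation) $g_L\, g_R$; and Kleene star $g_0^*$. The language $[\![ g ]\!]$ is the set of finite symbol sequences denoted by $g$ in the standard way: $[\![\epsilon]\!] = \{\text{empty sequence}\}$, $[\![x_0]\!]=\{x_0\}$, $[\![g_L\mid g_R]\!]=[\![g_L]\!]\cup[\![g_R]\!]$, $[\![g_L\,g_R]\!]$ is the set of concatenations $uv$ with $u\in[\![g_L]\!]$, $v\in[\![g_R]\!]$, and $[\![g_0^*]\!]=\bigcup_{n\ge 0}[\![g_0^n]\!]$ where $g_0^0=\epsilon$ and $g_0^{n+1}=g_0\,g_0^{n}$. Juxtaposition of sequences and symbols denotes concatenation. *)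

theory Defs
  imports Main
begin

datatype 'a rexp = Eps | Sym 'a | Alt "'a rexp" "'a rexp" | Seq "'a rexp" "'a rexp" | Star "'a rexp"

fun pow_lang :: "'a list set \<Rightarrow> nat \<Rightarrow> 'a list set" where
  "pow_lang L 0 = {[]}"
| "pow_lang L (Suc n) = {u @ v | u v. u \<in> L \<and> v \<in> pow_lang L n}"

fun lang :: "'a rexp \<Rightarrow> 'a list set" where
  "lang Eps = {[]}"
| "lang (Sym x) = {[x]}"
| "lang (Alt gl gr) = lang gl \<union> lang gr"
| "lang (Seq gl gr) = {u @ v | u v. u \<in> lang gl \<and> v \<in> lang gr}"
| "lang (Star g) = (\<Union>n. pow_lang (lang g) n)"

fun occ :: "'a \<Rightarrow> 'a rexp \<Rightarrow> nat" where
  "occ x Eps = 0"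
| "occ x (Sym y) = (if x = y then 1 else 0)"
| "occ x (Alt gl gr) = occ x gl + occ x gr"
| "occ x (Seq gl gr) = occ x gl + occ x gr"
| "occ x (Star g) = occ x g"

end

theory Submission
  imports Defs
begin

lemma split_mid:
  assumes "u @ v = xL @ x # yR"
  shows "(\<exists>b. u = xL @ x # b \<and> yR = b @ v) \<or> (\<exists>c. xL = u @ c \<and> v = c @ x # yR)"
proof -
  obtain us where "u = xL @ us \<and> us @ v = x # yR \<or> u @ us = xL \<and> v = us @ x # yR"
    using assms unfolding append_eq_append_conv2 by blast
  then show ?thesis
  proof
    assume h: "u = xL @ us \<and> us @ v = x # yR"
    show ?thesis
    proof (cases us)
      case Nil then show ?thesis using h by auto
    next
      case (Cons a l) then show ?thesis using h by auto
    qed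
  qed auto
qed

lemma pow_nox: "w \<in> pow_lang L n \<Longrightarrow> (\<forall>v\<in>L. x \<notin> set v) \<Longrightarrow> x \<notin> set w"
  by (induction n arbitrary: w) auto

lemma occ0_nox: "occ x g = 0 \<Longrightarrow> w \<in> lang g \<Longrightarrow> x \<notin> set w"
proof (induction g arbitrary: w)
  case (Star g)
  then show ?case using pow_nox[of w "lang g"] by auto
qed (auto split: if_splits)

lemma pow_app: "A \<in> pow_lang L k \<Longrightarrow> B \<in> pow_lang L m \<Longrightarrow> A @ B \<in> pow_lang L (k + m)"
proof (induction k arbitrary: A)
  case 0 then show ?case by simp
next
  case (Suc k)
  then obtain u v where "A = u @ v" "u \<in> L" "v \<in> pow_lang L k" by auto
  then show ?case using Suc.IH[of v] Suc.prems by auto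
qed

lemma pow_dec:
  "w \<in> pow_lang L n \<Longrightarrow> w = xL @ x # yR \<Longrightarrow>
   \<exists>k m P a b S. P \<in> pow_lang L k \<and> a @ x # b \<in> L \<and> S \<in> pow_lang L m \<and> xL = P @ a \<and> yR = b @ S"
proof (induction n arbitrary: w xL)
  case 0 then show ?case by simp
next
  case (Suc n)
  then obtain u v where uv: "w = u @ v" "u \<in> L" "v \<in> pow_lang L n" by auto
  have "(\<exists>b. u = xL @ x # b \<and> yR = b @ v) \<or> (\<exists>c. xL = u @ c \<and> v = c @ x # yR)"
    using split_mid[of u v xL x yR] uv Suc.prems(2) by simp
  then show ?case
  proof (elim disjE exE conjE)
    fix b assume "u = xL @ x # b" "yR = b @ v"
    then show ?thesis using uv
      by (intro exI[of _ 0] exI[of _ n] exI[of _ "[]"] exI[of _ xL] exI[of _ b] exI[of _ v]) auto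
  next
    fix c assume c: "xL = u @ c" "v = c @ x # yR"
    from Suc.IH[OF uv(3) c(2)] obtain k m P a b S where
      h: "P \<in> pow_lang L k" "a @ x # b \<in> L" "S \<in> pow_lang L m" "c = P @ a" "yR = b @ S" by blast
    have "u @ P \<in> pow_lang L (Suc k)" using h(1) uv(2) by auto
    then show ?thesis using h c
      by (intro exI[of _ "Suc k"] exI[of _ m] exI[of _ "u @ P"] exI[of _ a] exI[of _ b] exI[of _ S]) auto
  qed
qed

lemma main:
  "occ x g = 1 \<Longrightarrow> xL @ x # yR \<in> lang g \<Longrightarrow> yL @ x # xR \<in> lang g \<Longrightarrow> xL @ x # xR \<in> lang g"
proof (induction g arbitrary: xL xR yL yR)
  case Eps then show ?case by simp
next
  case (Sym y)
  have y: "y = x" using Sym.prems(1) by (simp split: if_splits)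
  have e1: "xL @ x # yR = [x]" using Sym.prems(2) y by simp
  have e2: "yL @ x # xR = [x]" using Sym.prems(3) y by simp
  have "xL = []" using e1 by (cases xL) auto
  moreover have "xR = []" using e2 by (cases yL) auto
  ultimately show ?case using y by simp
next
  case (Alt gl gr)
  have mem: "x \<in> set (xL @ x # yR)" "x \<in> set (yL @ x # xR)" by simp_all
  show ?case
  proof (cases "occ x gl = 1")
    case True
    then have "occ x gr = 0" using Alt.prems by simp
    then have "xL @ x # yR \<notin> lang gr" "yL @ x # xR \<notin> lang gr"
      using occ0_nox[of x gr] mem by blast+
    then have "xL @ x # yR \<in> lang gl" "yL @ x # xR \<in> lang gl"
      using Alt.prems(2,3) by auto
    then have "xL @ x # xR \<in> lang gl" by (rule Alt.IH(1)[OF True])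
    then show ?thesis by simp
  next
    case False
    then have "occ x gl = 0" "occ x gr = 1" using Alt.prems by auto
    then have "xL @ x # yR \<notin> lang gl" "yL @ x # xR \<notin> lang gl"
      using occ0_nox[of x gl] mem by blast+
    then have "xL @ x # yR \<in> lang gr" "yL @ x # xR \<in> lang gr"
      using Alt.prems(2,3) by auto
    then have "xL @ x # xR \<in> lang gr" by (rule Alt.IH(2)[OF \<open>occ x gr = 1\<close>])
    then show ?thesis by simp
  qed
next
  case (Seq gl gr)
  obtain u v where uv: "xL @ x # yR = u @ v" "u \<in> lang gl" "v \<in> lang gr" using Seq.prems by auto
  obtain u' v' where uv': "yL @ x # xR = u' @ v'" "u' \<in> lang gl" "v' \<in> lang gr" using Seq.prems by auto
  show ?case
  proof (cases "occ x gl = 1")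
    case True
    then have z: "occ x gr = 0" using Seq.prems by simp
    have nv: "x \<notin> set v" "x \<notin> set v'" using occ0_nox[OF z] uv(3) uv'(3) by blast+
    have "(\<exists>b. u = xL @ x # b \<and> yR = b @ v)"
      using split_mid[OF uv(1)[symmetric]] nv(1) by auto
    moreover have "(\<exists>b'. u' = yL @ x # b' \<and> xR = b' @ v')"
      using split_mid[OF uv'(1)[symmetric]] nv(2) by auto
    ultimately
    obtain b b' where b: "u = xL @ x # b" "u' = yL @ x # b'" "xR = b' @ v'"
      by blast
    have "xL @ x # b' \<in> lang gl" by (rule Seq.IH(1)[OF True, of xL b yL b']) (use b uv(2) uv'(2) in auto)
    moreover have "xL @ x # xR = (xL @ x # b') @ v'" using b by simp
    ultimately show ?thesis using uv'(3) unfolding lang.simps by blast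
  next
    case False
    then have z: "occ x gl = 0" "occ x gr = 1" using Seq.prems by auto
    have nu: "x \<notin> set u" "x \<notin> set u'" using occ0_nox[OF z(1)] uv(2) uv'(2) by blast+
    have "(\<exists>c. xL = u @ c \<and> v = c @ x # yR)"
      using split_mid[OF uv(1)[symmetric]] nu(1) by auto
    moreover have "(\<exists>c'. yL = u' @ c' \<and> v' = c' @ x # xR)"
      using split_mid[OF uv'(1)[symmetric]] nu(2) by auto
    ultimately
    obtain c c' where c: "xL = u @ c" "v = c @ x # yR" "v' = c' @ x # xR"
      by blast
    have "c @ x # xR \<in> lang gr" by (rule Seq.IH(2)[OF z(2), of c yR c' xR]) (use c uv(3) uv'(3) in auto)
    moreover have "xL @ x # xR = u @ (c @ x # xR)" using c by simp
    ultimately show ?thesis using uv(2) unfolding lang.simps by blast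
  qed
next
  case (Star g)
  have o: "occ x g = 1" using Star.prems by simp
  obtain n where "xL @ x # yR \<in> pow_lang (lang g) n" using Star.prems by auto
  from pow_dec[OF this refl] obtain k m P a b S where
    h: "P \<in> pow_lang (lang g) k" "a @ x # b \<in> lang g" "S \<in> pow_lang (lang g) m" "xL = P @ a" "yR = b @ S"
    by blast
  obtain n' where "yL @ x # xR \<in> pow_lang (lang g) n'" using Star.prems by auto
  from pow_dec[OF this refl] obtain k' m' P' a' b' S' where
    h': "P' \<in> pow_lang (lang g) k'" "a' @ x # b' \<in> lang g" "S' \<in> pow_lang (lang g) m'" "yL = P' @ a'" "xR = b' @ S'"
    by blast
  have "a @ x # b' \<in> lang g" using Star.IH[OF o h(2) h'(2)] .
  then have "(a @ x # b') @ S' \<in> pow_lang (lang g) (Suc m')" using h'(3) by (simp only: pow_lang.simps) blast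
  then have "P @ ((a @ x # b') @ S') \<in> pow_lang (lang g) (k + Suc m')" using pow_app h(1) by blast
  moreover have "xL @ x # xR = P @ ((a @ x # b') @ S')" using h h' by simp
  ultimately show ?case unfolding lang.simps by (metis UNIV_I UN_I)
qed

theorem mainTheorem1:
  fixes g :: "'a rexp" and x :: 'a and xL xR yL yR :: "'a list"
  assumes "occ x g = 1"
    and "xL @ [x] @ yR \<in> lang g"
    and "yL @ [x] @ xR \<in> lang g"
  shows "xL @ [x] @ xR \<in> lang g"
  using main[of x g xL yR yL xR] assms by simp

end
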